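(* Let $(\mathfrak g,J,\omega)$ be a $2n$-dimensional hermitian Lie algebra such that $\mathfrak g$ has a codimension-one abelian ideal. Then $(\mathfrak g,J,\omega)$ is equivalent (via a Lie algebra isomorphism intertwining the complex structures and the hermitian forms) to $(\mathbb R^{2n},\mu_{A,c,d_1,\dots,d_{2n-2}},J,\omega)$ for some $A\in\mathfrak{gl}_{n-1}(\mathbb C)$, $c\ge0$ and $d_i\in\mathbb R$. Moreover, the Chern-Ricci form and Chern-Ricci operator of $(\mathbb R^{2n},\mu_{A,c,d_1,\dots,d_{2n-2}},J,\omega)$ are $$p=-\tfrac12 c(2c+\operatorname{tr}A)\,e^1\wedge e^{2n},\qquad P=-\tfrac12 c(2c+\operatorname{tr}A)\,\pi,$$ where $\pi$ is the linear map with $\pi e_1=e_1$, $\pi e_{2n}=e_{2n}$ and $\pi e_i=0$ for $2\le i\le 2n-1$.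
   Context: A hermitian Lie algebra $(\mathfrak g,J,\omega)$: a real Lie algebra, $J$ with $J^2=-I$ integrable ($[JX,JY]=[X,Y]+J[JX,Y]+J[X,JY]$), and a nondegenerate 2-form $\omega$ with $\omega(J\cdot,J\cdot)=\omega$ and $g=\omega(\cdot,J\cdot)$ positive definite. Chern-Ricci form $p(X,Y)=-\tfrac12\operatorname{tr}(J\,\mathrm{ad}_{[X,Y]})+\tfrac12\operatorname{tr}(\mathrm{ad}_{J[X,Y]})$, Chern-Ricci operator $P$ with $p=\omega(P\cdot,\cdot)$. Let $\{e_1,\dots,e_{2n}\}$ be the standard basis of $\mathbb R^{2n}$ with dual basis $\{e^i\}$, $\omega=e^1\wedge e^{2n}+\dots+e^n\wedge e^{n+1}$, and $J$ defined by $Je_i=e_{2n+1-i}$, $Je_{2n+1-i}=-e_i$ for $1\le i\le n$. Let $\mathfrak n=\mathrm{span}\{e_1,\dots,e_{2n-1}\}$. For $c,d_1,\dots,d_{2n-2}\in\mathbb R$ and a real linear map $A$ of $V=\mathrm{span}\{e_2,\dots,e_{2n-1}\}$ commuting with $J|_V$ (written $A\in\mathfrak{gl}_{n-1}(\mathbb C)$), $\mu=\mu_{A,c,d_1,\dots,d_{2n-2}}$ is the Lie bracket for which $\mathfrak n$ is an abelian ideal and $\mathrm{ad}_\mu e_{2n}$ is given by $e_1\mapsto ce_1+\sum_{i=1}^{2n-2}d_ie_{i+1}$, $v\mapsto Av$ for $v\in V$, $e_{2n}\mapsto0$. $\operatorname{tr}A$ denotes the trace of $A$ as a real endomorphism of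 $V$. *)

theory Defs
  imports "HOL-Analysis.Analysis"
begin

definition lie_algebra :: "('a::real_vector \<Rightarrow> 'a \<Rightarrow> 'a) \<Rightarrow> bool" where
  "lie_algebra br \<longleftrightarrow> bilinear br \<and> (\<forall>x. br x x = 0) \<and>
     (\<forall>x y z. br x (br y z) + br y (br z x) + br z (br x y) = 0)"

definition integrable_cx_structure :: "('a::real_vector \<Rightarrow> 'a \<Rightarrow> 'a) \<Rightarrow> ('a \<Rightarrow> 'a) \<Rightarrow> bool" where
  "integrable_cx_structure br J \<longleftrightarrow> linear J \<and> (\<forall>x. J (J x) = - x) \<and>
     (\<forall>x y. br (J x) (J y) = br x y + J (br (J x) y) + J (br x (J y)))"

definition hermitian_lie_algebra ::
  "('a::real_vector \<Rightarrow> 'a \<Rightarrow> 'a) \<Rightarrow> ('a \<Rightarrow> 'a) \<Rightarrow> ('a \<Rightarrow> 'a \<Rightarrow> real) \<Rightarrow> bool" where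
  "hermitian_lie_algebra br J \<omega> \<longleftrightarrow> lie_algebra br \<and> integrable_cx_structure br J \<and>
     bilinear \<omega> \<and> (\<forall>x y. \<omega> x y = - \<omega> y x) \<and>
     (\<forall>x. (\<forall>y. \<omega> x y = 0) \<longrightarrow> x = 0) \<and>
     (\<forall>x y. \<omega> (J x) (J y) = \<omega> x y) \<and>
     (\<forall>x. x \<noteq> 0 \<longrightarrow> \<omega> x (J x) > 0)"

definition lie_ideal :: "('a::real_vector \<Rightarrow> 'a \<Rightarrow> 'a) \<Rightarrow> 'a set \<Rightarrow> bool" where
  "lie_ideal br I \<longleftrightarrow> subspace I \<and> (\<forall>x y. y \<in> I \<longrightarrow> br x y \<in> I)"

definition abelian_subalg :: "('a::real_vector \<Rightarrow> 'a \<Rightarrow> 'a) \<Rightarrow> 'a set \<Rightarrow> bool" where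
  "abelian_subalg br I \<longleftrightarrow> (\<forall>x\<in>I. \<forall>y\<in>I. br x y = 0)"

text \<open>Vectors of R^(2n) are represented as functions nat to real, with coordinates
  indexed 1..2n (and zero elsewhere); e i is the i-th standard basis vector.\<close>

definition Rsp :: "nat \<Rightarrow> (nat \<Rightarrow> real) set" where
  "Rsp n = {v. \<forall>i. i \<notin> {1..2*n} \<longrightarrow> v i = 0}"

definition ebas :: "nat \<Rightarrow> nat \<Rightarrow> real" where
  "ebas i = (\<lambda>j. if j = i then 1 else 0)"

definition Vsp :: "nat \<Rightarrow> (nat \<Rightarrow> real) set" where
  "Vsp n = {v. \<forall>i. i \<notin> {2..2*n-1} \<longrightarrow> v i = 0}"

text \<open>J e_i = e_(2n+1-i), J e_(2n+1-i) = - e_i for 1 \<le> i \<le> n.\<close>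
definition Jstd :: "nat \<Rightarrow> (nat \<Rightarrow> real) \<Rightarrow> (nat \<Rightarrow> real)" where
  "Jstd n v = (\<lambda>j. if 1 \<le> j \<and> j \<le> n then - v (2*n+1-j)
                   else if n+1 \<le> j \<and> j \<le> 2*n then v (2*n+1-j) else 0)"

definition \<omega>std :: "nat \<Rightarrow> (nat \<Rightarrow> real) \<Rightarrow> (nat \<Rightarrow> real) \<Rightarrow> real" where
  "\<omega>std n v w = (\<Sum>i=1..n. v i * w (2*n+1-i) - v (2*n+1-i) * w i)"

definition Amap :: "nat \<Rightarrow> (nat \<Rightarrow> nat \<Rightarrow> real) \<Rightarrow> (nat \<Rightarrow> real) \<Rightarrow> (nat \<Rightarrow> real)" where
  "Amap n a v = (\<lambda>i. if 2 \<le> i \<and> i \<le> 2*n-1 then (\<Sum>j=2..2*n-1. a i j * v j) else 0)"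

text \<open>A commutes with J restricted to V (i.e. A is in gl_(n-1)(C)).\<close>
definition A_complex :: "nat \<Rightarrow> (nat \<Rightarrow> nat \<Rightarrow> real) \<Rightarrow> bool" where
  "A_complex n a \<longleftrightarrow> (\<forall>v\<in>Vsp n. Amap n a (Jstd n v) = Jstd n (Amap n a v))"

definition trA :: "nat \<Rightarrow> (nat \<Rightarrow> nat \<Rightarrow> real) \<Rightarrow> real" where
  "trA n a = (\<Sum>i=2..2*n-1. a i i)"

text \<open>D = ad_mu e_(2n) restricted to n = span(e_1..e_(2n-1)):
  e_1 \<mapsto> c e_1 + sum d_i e_(i+1), v \<mapsto> A v on V; it only reads coordinates 1..2n-1.\<close>
definition Dmap :: "nat \<Rightarrow> (nat \<Rightarrow> nat \<Rightarrow> real) \<Rightarrow> real \<Rightarrow> (nat \<Rightarrow> real) \<Rightarrow> (nat \<Rightarrow> real) \<Rightarrow> (nat \<Rightarrow> real)" where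
  "Dmap n a c d v = (\<lambda>i. if i = 1 then c * v 1
       else if 2 \<le> i \<and> i \<le> 2*n-1 then d (i-1) * v 1 + Amap n a v i else 0)"

text \<open>The bracket mu_(A,c,d_1..d_(2n-2)): n abelian ideal, ad e_(2n) = D on n.
  [x' + x_(2n) e_(2n), y' + y_(2n) e_(2n)] = x_(2n) D y' - y_(2n) D x'.\<close>
definition mu :: "nat \<Rightarrow> (nat \<Rightarrow> nat \<Rightarrow> real) \<Rightarrow> real \<Rightarrow> (nat \<Rightarrow> real) \<Rightarrow> (nat \<Rightarrow> real) \<Rightarrow> (nat \<Rightarrow> real) \<Rightarrow> (nat \<Rightarrow> real)" where
  "mu n a c d x y = (\<lambda>i. x (2*n) * Dmap n a c d y i - y (2*n) * Dmap n a c d x i)"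

definition linear_to_R :: "('a::real_vector \<Rightarrow> (nat \<Rightarrow> real)) \<Rightarrow> bool" where
  "linear_to_R \<phi> \<longleftrightarrow> (\<forall>x y. \<phi> (x + y) = (\<lambda>i. \<phi> x i + \<phi> y i)) \<and>
     (\<forall>r x. \<phi> (r *\<^sub>R x) = (\<lambda>i. r * \<phi> x i))"

definition trR :: "nat \<Rightarrow> ((nat \<Rightarrow> real) \<Rightarrow> (nat \<Rightarrow> real)) \<Rightarrow> real" where
  "trR n f = (\<Sum>i=1..2*n. f (ebas i) i)"

definition chern_ricci_form ::
  "nat \<Rightarrow> ((nat \<Rightarrow> real) \<Rightarrow> (nat \<Rightarrow> real) \<Rightarrow> (nat \<Rightarrow> real)) \<Rightarrow> ((nat \<Rightarrow> real) \<Rightarrow> (nat \<Rightarrow> real))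
     \<Rightarrow> (nat \<Rightarrow> real) \<Rightarrow> (nat \<Rightarrow> real) \<Rightarrow> real" where
  "chern_ricci_form n br J X Y =
     - (1/2) * trR n (\<lambda>v. J (br (br X Y) v)) + (1/2) * trR n (\<lambda>v. br (J (br X Y)) v)"

definition chern_ricci_op ::
  "nat \<Rightarrow> ((nat \<Rightarrow> real) \<Rightarrow> (nat \<Rightarrow> real) \<Rightarrow> (nat \<Rightarrow> real)) \<Rightarrow> ((nat \<Rightarrow> real) \<Rightarrow> (nat \<Rightarrow> real))
     \<Rightarrow> ((nat \<Rightarrow> real) \<Rightarrow> (nat \<Rightarrow> real) \<Rightarrow> real) \<Rightarrow> (nat \<Rightarrow> real) \<Rightarrow> (nat \<Rightarrow> real)" where
  "chern_ricci_op n br J \<omega> = (THE P. (\<forall>X. X \<notin> Rsp n \<longrightarrow> P X = (\<lambda>i. 0)) \<and>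
      (\<forall>X\<in>Rsp n. P X \<in> Rsp n) \<and>
      (\<forall>X\<in>Rsp n. \<forall>Y\<in>Rsp n. chern_ricci_form n br J X Y = \<omega> (P X) Y))"

definition pistd :: "nat \<Rightarrow> (nat \<Rightarrow> real) \<Rightarrow> (nat \<Rightarrow> real)" where
  "pistd n v = (\<lambda>i. if i = 1 \<or> i = 2*n then v i else 0)"

end

theory Submission
  imports Defs
begin


definition orthon :: "('a::real_vector \<Rightarrow> 'a \<Rightarrow> real) \<Rightarrow> 'a set \<Rightarrow> bool" where
  "orthon g S \<longleftrightarrow> (\<forall>s\<in>S. \<forall>t\<in>S. g s t = (if s = t then 1 else 0))"

locale pdform =
  fixes g :: "'a::euclidean_space \<Rightarrow> 'a \<Rightarrow> real"
  assumes bil: "bilinear g" and sym: "g x y = g y x" and pos: "x \<noteq> 0 \<Longrightarrow> g x x > 0"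
begin

lemma bb: "bounded_bilinear g" using bil bilinear_conv_bounded_bilinear by auto

lemma ladd: "g (x + y) z = g x z + g y z" by (rule bilinear_ladd[OF bil])
lemma radd: "g z (x + y) = g z x + g z y" by (rule bilinear_radd[OF bil])
lemma lsub: "g (x - y) z = g x z - g y z" by (rule bilinear_lsub[OF bil])
lemma rsub: "g z (x - y) = g z x - g z y" by (rule bilinear_rsub[OF bil])
lemma lmul: "g (c *\<^sub>R x) z = c * g x z" using bilinear_lmul[OF bil] by simp
lemma rmul: "g z (c *\<^sub>R x) = c * g z x" using bilinear_rmul[OF bil] by simp
lemma lneg: "g (- x) z = - g x z" by (rule bilinear_lneg[OF bil])
lemma rneg: "g z (- x) = - g z x" by (rule bilinear_rneg[OF bil])
lemma lzero: "g 0 z = 0" by (rule bilinear_lzero[OF bil])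
lemma rzero: "g z 0 = 0" by (rule bilinear_rzero[OF bil])
lemma lsum: "g (\<Sum>i\<in>A. c i *\<^sub>R v i) z = (\<Sum>i\<in>A. c i * g (v i) z)"
proof -
  have "linear (\<lambda>x. g x z)" using bil unfolding bilinear_def by auto
  then have "g (\<Sum>i\<in>A. c i *\<^sub>R v i) z = (\<Sum>i\<in>A. g (c i *\<^sub>R v i) z)"
    by (rule linear_sum)
  then show ?thesis by (simp add: lmul)
qed
lemma rsum: "g z (\<Sum>i\<in>A. c i *\<^sub>R v i) = (\<Sum>i\<in>A. c i * g z (v i))"
  using lsum sym by simp

lemma gzero: "g x x = 0 \<Longrightarrow> x = 0" using pos by force

lemma perp_span:
  assumes "\<forall>s\<in>S. g x s = 0" and "y \<in> span S" shows "g x y = 0"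
proof -
  have "subspace {y. g x y = 0}"
    unfolding subspace_def by (simp add: radd rmul rzero)
  then show ?thesis using span_induct[of y S "\<lambda>y. g x y = 0"] assms by auto
qed

lemma orthon_indep: assumes "orthon g S" shows "independent S"
proof
  assume "dependent S"
  then obtain a where a: "a \<in> S" "a \<in> span (S - {a})" by (auto simp: dependent_def)
  have "\<forall>s\<in>S - {a}. g a s = 0" using assms a(1) unfolding orthon_def by auto
  then have "g a a = 0" using perp_span a(2) by blast
  moreover have "g a a = 1" using assms a(1) unfolding orthon_def by auto
  ultimately show False by simp
qed

lemma full_zero:
  assumes "orthon g S" "card S = DIM('a)" "\<forall>s\<in>S. g r s = 0" shows "r = 0"
proof -
  have fin: "finite S" using assms(2) card.infinite by (metis DIM_positive less_irrefl)
  have "independent S" using orthon_indep assms(1) by blast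
  moreover have "card S = dim (UNIV::'a set)" using assms(2) dim_UNIV by simp
  ultimately have "UNIV \<subseteq> span S" using card_eq_dim[of S UNIV] fin by auto
  then have "g r r = 0" using perp_span assms(3) by blast
  then show ?thesis by (rule gzero)
qed

lemma gext:
  assumes W: "subspace W" and o: "orthon g S" and SW: "S \<subseteq> W" and fin: "finite S"
    and lt: "card S < dim W"
  shows "\<exists>x\<in>W. g x x = 1 \<and> (\<forall>s\<in>S. g x s = 0)"
proof -
  have "\<not> W \<subseteq> span S"
  proof
    assume "W \<subseteq> span S"
    then have "dim W \<le> card S" using dim_le_card fin by blast
    then show False using lt by simp
  qed
  then obtain y where y: "y \<in> W" "y \<notin> span S" by auto
  define x0 where "x0 = y - (\<Sum>s\<in>S. g y s *\<^sub>R s)"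
  have x0W: "x0 \<in> W" unfolding x0_def
    using W SW y(1) by (auto intro!: subspace_diff subspace_sum subspace_scale)
  have perp: "g x0 t = 0" if t: "t \<in> S" for t
  proof -
    have "g x0 t = g y t - (\<Sum>s\<in>S. g y s * g s t)" unfolding x0_def by (simp add: lsub lsum)
    also have "(\<Sum>s\<in>S. g y s * g s t) = (\<Sum>s\<in>S. if s = t then g y s else 0)"
      using o t unfolding orthon_def by (intro sum.cong) auto
    also have "\<dots> = g y t" using fin t by simp
    finally show ?thesis by simp
  qed
  have "x0 \<noteq> 0"
  proof
    assume "x0 = 0"
    then have "y = (\<Sum>s\<in>S. g y s *\<^sub>R s)" unfolding x0_def by simp
    also have "\<dots> \<in> span S" by (intro span_sum span_scale span_base)
    finally show False using y(2) by simp
  qed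
  then have q: "g x0 x0 > 0" by (rule pos)
  define x where "x = (1 / sqrt (g x0 x0)) *\<^sub>R x0"
  have "g x x = (1 / sqrt (g x0 x0))^2 * g x0 x0" unfolding x_def by (simp add: lmul rmul power2_eq_square)
  also have "\<dots> = 1" using q by (simp add: power_divide)
  finally have "g x x = 1" .
  moreover have "x \<in> W" unfolding x_def using x0W W by (simp add: subspace_scale)
  moreover have "\<forall>s\<in>S. g x s = 0" unfolding x_def using perp by (simp add: lmul)
  ultimately show ?thesis by blast
qed


lemma onb_subspace:
  assumes W: "subspace W"
  shows "\<exists>S. finite S \<and> orthon g S \<and> S \<subseteq> W \<and> card S = dim W"
proof -
  have "\<forall>k. k \<le> dim W \<longrightarrow> (\<exists>S. finite S \<and> orthon g S \<and> S \<subseteq> W \<and> card S = k)"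
  proof
    fix k show "k \<le> dim W \<longrightarrow> (\<exists>S. finite S \<and> orthon g S \<and> S \<subseteq> W \<and> card S = k)"
    proof (induction k)
      case 0
      show ?case by (rule impI, rule exI[of _ "{}"]) (simp add: orthon_def)
    next
      case (Suc k)
      show ?case
      proof
        assume k: "Suc k \<le> dim W"
        then obtain S where S: "finite S" "orthon g S" "S \<subseteq> W" "card S = k" using Suc by auto
        then obtain x where x: "x \<in> W" "g x x = 1" "\<forall>s\<in>S. g x s = 0"
          using gext[OF W S(2) S(3) S(1)] k by auto
        have xS: "x \<notin> S" using x by auto
        have "orthon g (insert x S)" using S(2) x sym unfolding orthon_def by auto
        moreover have "card (insert x S) = Suc k" using S xS by simp
        ultimately show "\<exists>S. finite S \<and> orthon g S \<and> S \<subseteq> W \<and> card S = Suc k"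
          using S x by (intro exI[of _ "insert x S"]) auto
      qed
    qed
  qed
  then show ?thesis by auto
qed

lemma expand:
  assumes o: "orthon g S" and c: "card S = DIM('a)"
  shows "x = (\<Sum>s\<in>S. g x s *\<^sub>R s)"
proof -
  have fin: "finite S" using c card.infinite by (metis DIM_positive less_irrefl)
  define r where "r = x - (\<Sum>s\<in>S. g x s *\<^sub>R s)"
  have "\<forall>t\<in>S. g r t = 0"
  proof
    fix t assume t: "t \<in> S"
    have "g r t = g x t - (\<Sum>s\<in>S. g x s * g s t)" unfolding r_def by (simp add: lsub lsum)
    also have "(\<Sum>s\<in>S. g x s * g s t) = (\<Sum>s\<in>S. if s = t then g x s else 0)"
      using o t unfolding orthon_def by (intro sum.cong) auto
    also have "\<dots> = g x t" using fin t by simp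
    finally show "g r t = 0" by simp
  qed
  then have "r = 0" using full_zero o c by blast
  then show ?thesis unfolding r_def by simp
qed

end


locale hset =
  fixes br :: "'a::euclidean_space \<Rightarrow> 'a \<Rightarrow> 'a" and J :: "'a \<Rightarrow> 'a"
    and \<omega> :: "'a \<Rightarrow> 'a \<Rightarrow> real" and n :: nat
  assumes herm: "hermitian_lie_algebra br J \<omega>"
    and dimg: "DIM('a) = 2 * n"
begin

definition gg :: "'a \<Rightarrow> 'a \<Rightarrow> real" where "gg x y = \<omega> x (J y)"

lemma ics: "integrable_cx_structure br J" using herm unfolding hermitian_lie_algebra_def by blast
lemma Jlin: "linear J" using ics unfolding integrable_cx_structure_def by blast
lemma JJ: "J (J x) = - x" using ics unfolding integrable_cx_structure_def by blast
lemma integ: "br (J x) (J y) = br x y + J (br (J x) y) + J (br x (J y))"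
  using ics unfolding integrable_cx_structure_def by blast
lemma wbil: "bilinear \<omega>" using herm unfolding hermitian_lie_algebra_def by blast
lemma wanti: "\<omega> x y = - \<omega> y x" using herm unfolding hermitian_lie_algebra_def by blast
lemma wJ: "\<omega> (J x) (J y) = \<omega> x y" using herm unfolding hermitian_lie_algebra_def by blast
lemma wpos: "x \<noteq> 0 \<Longrightarrow> \<omega> x (J x) > 0" using herm unfolding hermitian_lie_algebra_def by blast
lemma lie: "lie_algebra br" using herm unfolding hermitian_lie_algebra_def by blast
lemma brbil: "bilinear br" using lie unfolding lie_algebra_def by blast
lemma bralt: "br x x = 0" using lie unfolding lie_algebra_def by blast
lemma branti: "br x y = - br y x"
proof -
  have "br (x + y) (x + y) = 0" by (rule bralt)
  then have "br x x + br y x + (br x y + br y y) = 0"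
    by (simp add: bilinear_ladd[OF brbil] bilinear_radd[OF brbil])
  then have "br x y + br y x = 0" by (simp add: bralt add.commute)
  then show ?thesis by (simp add: eq_neg_iff_add_eq_0)
qed

lemma Jneg: "J (- x) = - J x" using Jlin by (rule linear_neg)
lemma Jadd: "J (x + y) = J x + J y" using Jlin by (rule linear_add)
lemma Jscale: "J (c *\<^sub>R x) = c *\<^sub>R J x" using Jlin by (rule linear_scale)
lemma Jsub: "J (x - y) = J x - J y" using Jlin by (rule linear_diff)
lemma Jzero: "J 0 = 0" using Jlin by (rule linear_0)

lemma wlneg: "\<omega> (- x) z = - \<omega> x z" by (rule bilinear_lneg[OF wbil])
lemma wrneg: "\<omega> z (- x) = - \<omega> z x" by (rule bilinear_rneg[OF wbil])

lemma gbil: "bilinear gg"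
  unfolding bilinear_def gg_def
proof (intro conjI allI)
  fix x show "linear (\<lambda>y. \<omega> x (J y))"
    using linear_compose[OF Jlin, of "\<omega> x"] wbil unfolding bilinear_def o_def by auto
next
  fix y show "linear (\<lambda>x. \<omega> x (J y))" using wbil unfolding bilinear_def by auto
qed

lemma gsym: "gg x y = gg y x"
proof -
  have 1: "gg y x = - \<omega> (J x) y" unfolding gg_def by (rule wanti)
  have 2: "\<omega> (J (J x)) (J y) = \<omega> (J x) y" by (rule wJ)
  have 3: "\<omega> (J (J x)) (J y) = - \<omega> x (J y)" by (simp add: JJ wlneg)
  have 4: "\<omega> (J x) y = - \<omega> x (J y)" using 2 3 by (rule trans[OF sym])
  have 5: "gg x y = - \<omega> (J x) y" unfolding 4 gg_def by (rule minus_minus[symmetric])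
  show ?thesis by (rule trans[OF 5 sym[OF 1]])
qed

sublocale pdform gg
proof
  show "bilinear gg" by (rule gbil)
  show "gg x y = gg y x" for x y by (rule gsym)
  show "x \<noteq> 0 \<Longrightarrow> 0 < gg x x" for x unfolding gg_def by (rule wpos)
qed

lemma gJJ: "gg (J x) (J y) = gg x y" by (simp add: gg_def wJ)
lemma gJl: "gg (J x) y = - gg x (J y)"
proof -
  have "gg (J x) y = \<omega> x y" by (simp add: gg_def wJ)
  moreover have "gg x (J y) = - \<omega> x y" by (simp add: gg_def JJ wrneg)
  ultimately show ?thesis by simp
qed
lemma gJr: "gg x (J y) = - gg (J x) y" by (simp add: gJl)
lemma gJself: "gg x (J x) = 0"
proof -
  have "gg x (J x) = - \<omega> x x" by (simp add: gg_def JJ wrneg)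
  moreover have "\<omega> x x = 0" using wanti[of x x] equal_neg_zero by blast
  ultimately show ?thesis by simp
qed
lemma w_g: "\<omega> x y = - gg x (J y)" by (simp add: gg_def JJ wrneg)

lemma frame:
  assumes f1: "gg f1 f1 = 1" and n1: "1 \<le> n"
  shows "\<exists>f. f 1 = f1 \<and> (\<forall>i\<in>{1..n}. \<forall>j\<in>{1..n}.
             gg (f i) (f j) = (if i = j then 1 else 0) \<and> gg (f i) (J (f j)) = 0)"
proof -
  have "\<forall>k. 1 \<le> k \<longrightarrow> k \<le> n \<longrightarrow> (\<exists>f. f 1 = f1 \<and> (\<forall>i\<in>{1..k}. \<forall>j\<in>{1..k}.
             gg (f i) (f j) = (if i = j then 1 else 0) \<and> gg (f i) (J (f j)) = 0))"
  proof
    fix k show "1 \<le> k \<longrightarrow> k \<le> n \<longrightarrow> (\<exists>f. f 1 = f1 \<and> (\<forall>i\<in>{1..k}. \<forall>j\<in>{1..k}.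
             gg (f i) (f j) = (if i = j then 1 else 0) \<and> gg (f i) (J (f j)) = 0))"
    proof (induction k)
      case 0 then show ?case by simp
    next
      case (Suc k)
      show ?case
      proof (intro impI)
        assume k1: "1 \<le> Suc k" and kn: "Suc k \<le> n"
        show "\<exists>f. f 1 = f1 \<and> (\<forall>i\<in>{1..Suc k}. \<forall>j\<in>{1..Suc k}.
             gg (f i) (f j) = (if i = j then 1 else 0) \<and> gg (f i) (J (f j)) = 0)"
        proof (cases "k = 0")
          case True
          then show ?thesis using f1 gJself by (intro exI[of _ "\<lambda>_. f1"]) auto
        next
          case False
          then obtain f where ff: "f 1 = f1" and P: "\<forall>i\<in>{1..k}. \<forall>j\<in>{1..k}.
             gg (f i) (f j) = (if i = j then 1 else 0) \<and> gg (f i) (J (f j)) = 0"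
            using Suc kn by auto
          define S where "S = f ` {1..k} \<union> (\<lambda>i. J (f i)) ` {1..k}"
          have finS: "finite S" unfolding S_def by simp
          have cS: "card S \<le> k + k" unfolding S_def
            by (rule order_trans[OF card_Un_le]) (intro add_mono; metis card_atLeastAtMost card_image_le finite_atLeastAtMost diff_Suc_1)
          have oS: "orthon gg S" unfolding orthon_def S_def
          proof (intro ballI)
            fix s t assume s: "s \<in> f ` {1..k} \<union> (\<lambda>i. J (f i)) ` {1..k}"
              and t: "t \<in> f ` {1..k} \<union> (\<lambda>i. J (f i)) ` {1..k}"
            have u: "gg (f i) (f i) = 1" if "i \<in> {1..k}" for i using P that by auto
            have a1: "gg (f i) (f j) = (if f i = f j then 1 else 0)" if "i \<in> {1..k}" "j \<in> {1..k}" for i j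
              using P that u by (metis zero_neq_one)
            have a2: "gg (f i) (J (f j)) = (if f i = J (f j) then 1 else 0)" if "i \<in> {1..k}" "j \<in> {1..k}" for i j
              using P that u by (metis zero_neq_one)
            have a3: "gg (J (f i)) (f j) = (if J (f i) = f j then 1 else 0)" if "i \<in> {1..k}" "j \<in> {1..k}" for i j
            proof -
              have "gg (J (f i)) (f j) = 0" using P that gJl[of "f i" "f j"] by simp
              then show ?thesis using u[OF that(2)] by auto
            qed
            have a4: "gg (J (f i)) (J (f j)) = (if J (f i) = J (f j) then 1 else 0)" if "i \<in> {1..k}" "j \<in> {1..k}" for i j
              using a1[OF that] gJJ by (metis JJ neg_equal_iff_equal)
            show "gg s t = (if s = t then 1 else 0)" using s t a1 a2 a3 a4 by auto
          qed
          have "card S < dim (UNIV :: 'a set)" using cS kn dimg dim_UNIV by simp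
          then obtain x where x: "gg x x = 1" "\<forall>s\<in>S. gg x s = 0"
            using gext[OF subspace_UNIV oS _ finS] by auto
          have x1: "gg x (f j) = 0" "gg (f j) x = 0" "gg x (J (f j)) = 0" "gg (f j) (J x) = 0"
            if "j \<in> {1..k}" for j
          proof -
            have a: "gg x (f j) = 0" "gg x (J (f j)) = 0" using x(2) that unfolding S_def by auto
            have b: "gg (f j) (J x) = - gg (J (f j)) x" by (rule gJr)
            show "gg x (f j) = 0" "gg (f j) x = 0" "gg x (J (f j)) = 0" "gg (f j) (J x) = 0"
              using a b gsym[of x "f j"] gsym[of x "J (f j)"] by simp_all
          qed
          have x2: "gg x (J x) = 0" by (rule gJself)
          define f' where "f' = f(Suc k := x)"
          have "f' 1 = f1" using ff False unfolding f'_def by simp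
          moreover have "\<forall>i\<in>{1..Suc k}. \<forall>j\<in>{1..Suc k}.
             gg (f' i) (f' j) = (if i = j then 1 else 0) \<and> gg (f' i) (J (f' j)) = 0"
          proof (intro ballI)
            fix i j assume i: "i \<in> {1..Suc k}" and j: "j \<in> {1..Suc k}"
            show "gg (f' i) (f' j) = (if i = j then 1 else 0) \<and> gg (f' i) (J (f' j)) = 0"
            proof (cases "i = Suc k")
              case True
              then show ?thesis using j x x1 x2 unfolding f'_def by (cases "j = Suc k") auto
            next
              case False
              then have i': "i \<in> {1..k}" using i by auto
              then show ?thesis using j x1[OF i'] P i' unfolding f'_def by (cases "j = Suc k") auto
            qed
          qed
          ultimately show ?thesis by blast
        qed
      qed
    qed
  qed
  then show ?thesis using n1 by blast
qed

end


lemma sum_split3: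
  fixes n :: nat assumes "1 \<le> n" shows "(\<Sum>j=1..2*n. h j) = h 1 + (\<Sum>j=2..2*n-1. h j) + h (2*n)"
proof -
  obtain m where m: "n = Suc m" using assms by (cases n) auto
  have "(\<Sum>j=1..2*n. h j) = (\<Sum>j=1..Suc (2*m+1). h j)" using m by simp
  also have "\<dots> = (\<Sum>j=1..2*m+1. h j) + h (Suc (2*m+1))" by simp
  also have "(\<Sum>j=1..2*m+1. h j) = h 1 + (\<Sum>j=2..2*m+1. h j)"
    by (subst sum.atLeast_Suc_atMost) (auto simp: numeral_2_eq_2)
  finally show ?thesis using m by (simp add: numeral_2_eq_2)
qed

lemma Dmap_cong:
  assumes "1 \<le> n" "\<And>i. i \<noteq> 2*n \<Longrightarrow> v i = w i"
  shows "Dmap n a c d v = Dmap n a c d w"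
proof -
  have "Amap n a v = Amap n a w" unfolding Amap_def
    using assms by (intro ext) (auto intro!: sum.cong)
  moreover have "v 1 = w 1" using assms by auto
  ultimately show ?thesis unfolding Dmap_def by (auto simp: fun_eq_iff)
qed

lemma Dmap_A:
  assumes "v 1 = 0" shows "Dmap n a c d v = Amap n a v"
  using assms unfolding Dmap_def Amap_def by (auto simp: fun_eq_iff)

lemma omega_std_J:
  "- (\<Sum>i=1..2*n. v i * Jstd n w i) = \<omega>std n v w"
proof -
  have split: "(\<Sum>i=1..2*n. v i * Jstd n w i) = (\<Sum>i=1..n. v i * Jstd n w i) + (\<Sum>i=n+1..2*n. v i * Jstd n w i)"
    using sum.ub_add_nat[of 1 n "\<lambda>i. v i * Jstd n w i" n] by (cases "n = 0") (auto simp: mult_2)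
  have p1: "(\<Sum>i=1..n. v i * Jstd n w i) = - (\<Sum>i=1..n. v i * w (2*n+1-i))"
    unfolding Jstd_def by (simp add: sum_negf[symmetric])
  have p2: "(\<Sum>i=n+1..2*n. v i * Jstd n w i) = (\<Sum>i=1..n. v (2*n+1-i) * w i)"
    by (rule sum.reindex_bij_witness[of _ "\<lambda>i. 2*n+1-i" "\<lambda>i. 2*n+1-i"]) (auto simp: Jstd_def)
  show ?thesis unfolding \<omega>std_def split p1 p2 by (simp add: sum_subtractf)
qed

lemma sum_only:
  fixes h :: "nat \<Rightarrow> real"
  assumes "finite A" "k \<in> A" "\<And>i. i \<in> A \<Longrightarrow> i \<noteq> k \<Longrightarrow> h i = 0"
  shows "(\<Sum>i\<in>A. h i) = h k"
proof -
  have "(\<Sum>i\<in>A. h i) = (\<Sum>i\<in>A. if i = k then h k else 0)"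
    using assms by (intro sum.cong) auto
  also have "\<dots> = h k" using assms by simp
  finally show ?thesis .
qed

lemma omega_ebas1:
  assumes "j \<in> {1..n}" shows "\<omega>std n w (ebas j) = - w (2*n+1-j)"
proof -
  have "\<omega>std n w (ebas j) = (\<Sum>i=1..n. w i * ebas j (2*n+1-i) - w (2*n+1-i) * ebas j i)"
    unfolding \<omega>std_def ..
  also have "\<dots> = w j * ebas j (2*n+1-j) - w (2*n+1-j) * ebas j j"
    using assms by (intro sum_only) (auto simp: ebas_def)
  also have "\<dots> = - w (2*n+1-j)" using assms by (auto simp: ebas_def)
  finally show ?thesis .
qed

lemma omega_ebas2:
  assumes "j \<in> {n+1..2*n}" shows "\<omega>std n w (ebas j) = w (2*n+1-j)"
proof -
  have "\<omega>std n w (ebas j) = (\<Sum>i=1..n. w i * ebas j (2*n+1-i) - w (2*n+1-i) * ebas j i)"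
    unfolding \<omega>std_def ..
  also have "\<dots> = w (2*n+1-j) * ebas j (2*n+1-(2*n+1-j)) - w (2*n+1-(2*n+1-j)) * ebas j (2*n+1-j)"
    using assms by (intro sum_only) (auto simp: ebas_def)
  also have "\<dots> = w (2*n+1-j)" using assms by (auto simp: ebas_def)
  finally show ?thesis .
qed

lemma omega_nondeg:
  assumes u: "u \<in> Rsp n" and v: "v \<in> Rsp n" and e: "\<forall>Y\<in>Rsp n. \<omega>std n u Y = \<omega>std n v Y"
  shows "u = v"
proof
  fix k
  show "u k = v k"
  proof (cases "k \<in> {1..2*n}")
    case False then show ?thesis using u v unfolding Rsp_def by auto
  next
    case True
    have eR: "ebas (2*n+1-k) \<in> Rsp n" using True unfolding Rsp_def ebas_def by auto
    have kk: "2*n+1-(2*n+1-k) = k" using True by auto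
    show ?thesis
    proof (cases "k \<le> n")
      case True2: True
      then have "2*n+1-k \<in> {n+1..2*n}" using True by auto
      then show ?thesis using e eR omega_ebas2[of "2*n+1-k" n u] omega_ebas2[of "2*n+1-k" n v] kk by simp
    next
      case False2: False
      then have "2*n+1-k \<in> {1..n}" using True by auto
      then show ?thesis using e eR omega_ebas1[of "2*n+1-k" n u] omega_ebas1[of "2*n+1-k" n v] kk by simp
    qed
  qed
qed

lemma Dmap_2n: "1 \<le> n \<Longrightarrow> Dmap n a c d v (2*n) = 0" unfolding Dmap_def by auto
lemma Dmap_1: "Dmap n a c d v 1 = c * v 1" unfolding Dmap_def by auto

lemma trD: assumes "1 \<le> n" shows "(\<Sum>i=1..2*n. Dmap n a c d (ebas i) i) = c + trA n a"
proof -
  have "(\<Sum>i=1..2*n. Dmap n a c d (ebas i) i) = Dmap n a c d (ebas 1) 1 + (\<Sum>i=2..2*n-1. Dmap n a c d (ebas i) i) + Dmap n a c d (ebas (2*n)) (2*n)"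
    by (rule sum_split3[OF assms])
  also have "Dmap n a c d (ebas 1) 1 = c" unfolding Dmap_def ebas_def by simp
  also have "Dmap n a c d (ebas (2*n)) (2*n) = 0" using Dmap_2n[OF assms] .
  also have "(\<Sum>i=2..2*n-1. Dmap n a c d (ebas i) i) = (\<Sum>i=2..2*n-1. a i i)"
  proof (rule sum.cong[OF refl])
    fix i assume i: "i \<in> {2..2*n-1}"
    have "Amap n a (ebas i) i = (\<Sum>j=2..2*n-1. a i j * ebas i j)" using i unfolding Amap_def by simp
    also have "\<dots> = a i i * ebas i i" using i by (intro sum_only) (auto simp: ebas_def)
    finally show "Dmap n a c d (ebas i) i = a i i" using i unfolding Dmap_def by (simp add: ebas_def)
  qed
  finally show ?thesis unfolding trA_def by simp
qed

lemma crf: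
  assumes n1: "1 \<le> n"
  shows "chern_ricci_form n (mu n a c d) (Jstd n) X Y
                = - (1/2) * c * (2*c + trA n a) * (X 1 * Y (2*n) - X (2*n) * Y 1)"
proof -
  define Z where "Z = mu n a c d X Y"
  have Z2n: "Z (2*n) = 0" unfolding Z_def mu_def using Dmap_2n[OF n1] by simp
  have Z1: "Z 1 = c * (X (2*n) * Y 1 - Y (2*n) * X 1)" unfolding Z_def mu_def Dmap_1 by (simp add: algebra_simps)
  have t1: "trR n (\<lambda>v. Jstd n (mu n a c d Z v)) = - c * Z 1"
  proof -
    have "trR n (\<lambda>v. Jstd n (mu n a c d Z v)) = Jstd n (mu n a c d Z (ebas (2*n))) (2*n)"
      unfolding trR_def
    proof (rule sum_only)
      fix i assume i: "i \<in> {1..2*n}" "i \<noteq> 2*n"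
      show "Jstd n (mu n a c d Z (ebas i)) i = 0"
        using i Z2n unfolding Jstd_def mu_def ebas_def by auto
    qed (use n1 in auto)
    also have "\<dots> = - c * Z 1" using n1 Z2n Dmap_1[of n a c d Z] unfolding Jstd_def mu_def ebas_def by auto
    finally show ?thesis .
  qed
  have JZ: "Jstd n Z (2*n) = Z 1" using n1 unfolding Jstd_def by auto
  have t2: "trR n (\<lambda>v. mu n a c d (Jstd n Z) v) = Z 1 * (c + trA n a)"
  proof -
    have "trR n (\<lambda>v. mu n a c d (Jstd n Z) v) = (\<Sum>i=1..2*n. Jstd n Z (2*n) * Dmap n a c d (ebas i) i - ebas i (2*n) * Dmap n a c d (Jstd n Z) i)"
      unfolding trR_def mu_def ..
    also have "\<dots> = (\<Sum>i=1..2*n. Jstd n Z (2*n) * Dmap n a c d (ebas i) i)"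
      using Dmap_2n[OF n1] by (intro sum.cong) (auto simp: ebas_def)
    also have "\<dots> = Jstd n Z (2*n) * (\<Sum>i=1..2*n. Dmap n a c d (ebas i) i)" by (simp add: sum_distrib_left)
    also have "\<dots> = Z 1 * (c + trA n a)" using trD[OF n1] JZ by simp
    finally show ?thesis .
  qed
  show ?thesis unfolding chern_ricci_form_def Z_def[symmetric] t1 t2 Z1 by (simp add: algebra_simps)
qed

lemma crop:
  assumes n1: "1 \<le> n" and X: "X \<in> Rsp n"
  shows "chern_ricci_op n (mu n a c d) (Jstd n) (\<omega>std n) X
                = (\<lambda>i. (- (1/2) * c * (2*c + trA n a)) * pistd n X i)"
proof -
  define k where "k = - (1/2) * c * (2*c + trA n a)"
  define P0 where "P0 X = (if X \<in> Rsp n then (\<lambda>i. k * pistd n X i) else (\<lambda>i. 0))" for X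
  let ?Q = "\<lambda>P. (\<forall>X. X \<notin> Rsp n \<longrightarrow> P X = (\<lambda>i. 0)) \<and>
      (\<forall>X\<in>Rsp n. P X \<in> Rsp n) \<and>
      (\<forall>X\<in>Rsp n. \<forall>Y\<in>Rsp n. chern_ricci_form n (mu n a c d) (Jstd n) X Y = \<omega>std n (P X) Y)"
  have wP: "\<omega>std n (\<lambda>i. k * pistd n X i) Y = k * (X 1 * Y (2*n) - X (2*n) * Y 1)" for X Y
  proof -
    have "\<omega>std n (\<lambda>i. k * pistd n X i) Y = (\<Sum>i=1..n. k * pistd n X i * Y (2*n+1-i) - k * pistd n X (2*n+1-i) * Y i)"
      unfolding \<omega>std_def ..
    also have "\<dots> = k * pistd n X 1 * Y (2*n+1-1) - k * pistd n X (2*n+1-1) * Y 1"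
      using n1 by (intro sum_only) (auto simp: pistd_def)
    also have "\<dots> = k * (X 1 * Y (2*n) - X (2*n) * Y 1)" using n1 by (simp add: pistd_def algebra_simps)
    finally show ?thesis .
  qed
  have QP0: "?Q P0"
  proof (intro conjI allI impI ballI)
    fix X assume "X \<notin> Rsp n" then show "P0 X = (\<lambda>i. 0)" unfolding P0_def by simp
  next
    fix X assume "X \<in> Rsp n" then show "P0 X \<in> Rsp n" using n1 unfolding P0_def Rsp_def pistd_def by auto
  next
    fix X Y assume "X \<in> Rsp n" "Y \<in> Rsp n"
    then show "chern_ricci_form n (mu n a c d) (Jstd n) X Y = \<omega>std n (P0 X) Y"
      unfolding P0_def using wP crf[OF n1] k_def by simp
  qed
  have uniq: "P = P0" if "?Q P" for P
  proof
    fix X show "P X = P0 X"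
    proof (cases "X \<in> Rsp n")
      case False then show ?thesis using that unfolding P0_def by simp
    next
      case True
      show ?thesis
        by (rule omega_nondeg[of _ n]) (use that QP0 True in auto)
    qed
  qed
  have "chern_ricci_op n (mu n a c d) (Jstd n) (\<omega>std n) = P0"
    unfolding chern_ricci_op_def
    apply (rule the_equality)
     apply (rule QP0)
    apply (erule uniq)
    done
  then show ?thesis using X unfolding P0_def k_def by simp
qed



context hset begin

lemma n1: "1 \<le> n" using dimg DIM_positive[where 'a='a] by linarith

lemma from_N:
  assumes Iideal: "lie_ideal br I" and Iab: "abelian_subalg br I"
    and NN: "gg N N = 1" and Nperp: "\<forall>z\<in>I. gg z N = 0"
    and Nq: "\<forall>z. gg z N = 0 \<longrightarrow> z \<in> I"
    and Nc: "gg (br N (J N)) (J N) \<ge> 0"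
  shows "\<exists>a c d \<phi>. A_complex n a \<and> c \<ge> 0 \<and>
            linear_to_R \<phi> \<and> bij_betw \<phi> UNIV (Rsp n) \<and>
            (\<forall>x y. \<phi> (br x y) = mu n a c d (\<phi> x) (\<phi> y)) \<and>
            (\<forall>x. \<phi> (J x) = Jstd n (\<phi> x)) \<and>
            (\<forall>x y. \<omega>std n (\<phi> x) (\<phi> y) = \<omega> x y)"
proof -
  have nn: "1 \<le> n" by (rule n1)
  have Iid: "\<And>x y. y \<in> I \<Longrightarrow> br x y \<in> I" using Iideal unfolding lie_ideal_def by blast
  have Iabel: "\<And>x y. x \<in> I \<Longrightarrow> y \<in> I \<Longrightarrow> br x y = 0" using Iab unfolding abelian_subalg_def by blast
  define f1 where "f1 = - J N"
  have f1u: "gg f1 f1 = 1" unfolding f1_def using NN gJJ[of N N] by (simp add: lneg rneg)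
  obtain f where ff1: "f 1 = f1" and fP: "\<forall>i\<in>{1..n}. \<forall>j\<in>{1..n}.
             gg (f i) (f j) = (if i = j then 1 else 0) \<and> gg (f i) (J (f j)) = 0"
    using frame[OF f1u nn] by blast
  define b where "b i = (if i \<le> n then f i else J (f (2*n+1-i)))" for i
  have b1: "b 1 = - J N" using ff1 nn unfolding b_def f1_def by simp
  have b2n: "b (2*n) = N"
  proof -
    have "b (2*n) = J (f 1)" using nn unfolding b_def by simp
    also have "\<dots> = N" using ff1 unfolding f1_def by (simp add: Jneg JJ)
    finally show ?thesis .
  qed
  have borth: "gg (b i) (b j) = (if i = j then 1 else 0)" if ij: "i \<in> {1..2*n}" "j \<in> {1..2*n}" for i j
  proof (cases "i \<le> n")
    case True
    show ?thesis
    proof (cases "j \<le> n")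
      case True
      then show ?thesis using \<open>i \<le> n\<close> fP ij unfolding b_def by auto
    next
      case False
      then have "2*n+1-j \<in> {1..n}" "i \<in> {1..n}" using ij \<open>i \<le> n\<close> by auto
      then have "gg (f i) (J (f (2*n+1-j))) = 0" using fP by blast
      then show ?thesis using \<open>i \<le> n\<close> False unfolding b_def by auto
    qed
  next
    case False
    note iF = this
    show ?thesis
    proof (cases "j \<le> n")
      case True
      then have "2*n+1-i \<in> {1..n}" "j \<in> {1..n}" using ij iF by auto
      then have "gg (f (2*n+1-i)) (J (f j)) = 0" using fP by blast
      then have "gg (J (f (2*n+1-i))) (f j) = 0" using gJl by simp
      then show ?thesis using iF True unfolding b_def by auto
    next
      case False
      then have "2*n+1-i \<in> {1..n}" "2*n+1-j \<in> {1..n}" using ij iF by auto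
      then have "gg (f (2*n+1-i)) (f (2*n+1-j)) = (if 2*n+1-i = 2*n+1-j then 1 else 0)"
        using fP by blast
      moreover have "(2*n+1-i = 2*n+1-j) = (i = j)" using ij by auto
      ultimately show ?thesis using iF False unfolding b_def by (simp add: gJJ)
    qed
  qed
  have Jb1: "J (b i) = b (2*n+1-i)" if "i \<in> {1..n}" for i
  proof -
    have "2*n+1-(2*n+1-i) = i" "\<not> 2*n+1-i \<le> n" using that by auto
    then show ?thesis using that unfolding b_def by auto
  qed
  have Jb2: "J (b i) = - b (2*n+1-i)" if "i \<in> {n+1..2*n}" for i
  proof -
    have "2*n+1-i \<le> n" using that by auto
    then show ?thesis using that unfolding b_def by (auto simp: JJ)
  qed
  have bu: "gg (b i) (b i) = 1" if "i \<in> {1..2*n}" for i using borth[OF that that] by simp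
  have binj: "inj_on b {1..2*n}"
  proof (rule inj_onI)
    fix i j assume i: "i \<in> {1..2*n}" and j: "j \<in> {1..2*n}" and e: "b i = b j"
    have "gg (b i) (b j) = 1" using e bu[OF i] by simp
    then show "i = j" using borth[OF i j] by (auto split: if_splits)
  qed
  define B where "B = b ` {1..2*n}"
  have oB: "orthon gg B" unfolding orthon_def B_def
  proof (intro ballI)
    fix s t assume "s \<in> b ` {1..2*n}" "t \<in> b ` {1..2*n}"
    then obtain i j where ij: "i \<in> {1..2*n}" "j \<in> {1..2*n}" "s = b i" "t = b j" by auto
    have "(b i = b j) = (i = j)" using binj ij(1,2) unfolding inj_on_def by blast
    then show "gg s t = (if s = t then 1 else 0)" using borth[OF ij(1,2)] ij(3,4) by simp
  qed
  have cB: "card B = DIM('a)" unfolding B_def using card_image[OF binj] dimg by simp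
  have bexp: "x = (\<Sum>i=1..2*n. gg x (b i) *\<^sub>R b i)" for x
  proof -
    have "x = (\<Sum>s\<in>B. gg x s *\<^sub>R s)" by (rule expand[OF oB cB])
    also have "\<dots> = (\<Sum>i=1..2*n. gg x (b i) *\<^sub>R b i)" unfolding B_def
      by (rule sum.reindex[OF binj, unfolded o_def])
    finally show ?thesis .
  qed
  have bzero: "r = 0" if "\<forall>i\<in>{1..2*n}. gg r (b i) = 0" for r
    using full_zero[OF oB cB] that unfolding B_def by blast
  define \<phi> where "\<phi> x = (\<lambda>i. if i \<in> {1..2*n} then gg x (b i) else 0)" for x
  define \<psi> where "\<psi> v = (\<Sum>i=1..2*n. v i *\<^sub>R b i)" for v :: "nat \<Rightarrow> real"
  have gpsi: "gg (\<psi> v) (b j) = v j" if "j \<in> {1..2*n}" for v j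
  proof -
    have "gg (\<psi> v) (b j) = (\<Sum>i=1..2*n. v i * gg (b i) (b j))" unfolding \<psi>_def by (rule lsum)
    also have "\<dots> = (\<Sum>i=1..2*n. if i = j then v i else 0)"
      using borth that by (intro sum.cong) auto
    also have "\<dots> = v j" using that by simp
    finally show ?thesis .
  qed
  have phipsi: "\<phi> (\<psi> v) = v" if "v \<in> Rsp n" for v
    using that gpsi unfolding \<phi>_def Rsp_def by (auto simp: fun_eq_iff)
  have psiphi: "\<psi> (\<phi> x) = x" for x
  proof -
    have "\<psi> (\<phi> x) = (\<Sum>i=1..2*n. gg x (b i) *\<^sub>R b i)" unfolding \<psi>_def \<phi>_def
      by (intro sum.cong) auto
    then show ?thesis using bexp[of x] by simp
  qed
  have phiR: "\<phi> x \<in> Rsp n" for x unfolding \<phi>_def Rsp_def by auto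
  have parse: "gg x z = (\<Sum>i=1..2*n. \<phi> x i * \<phi> z i)" for x z
  proof -
    have "gg x z = gg (\<Sum>i=1..2*n. gg x (b i) *\<^sub>R b i) z" using bexp[of x] by simp
    also have "\<dots> = (\<Sum>i=1..2*n. gg x (b i) * gg (b i) z)" by (rule lsum)
    also have "\<dots> = (\<Sum>i=1..2*n. \<phi> x i * \<phi> z i)" unfolding \<phi>_def
      by (intro sum.cong) (auto simp: gsym)
    finally show ?thesis .
  qed
  have linphi: "linear_to_R \<phi>" unfolding linear_to_R_def \<phi>_def
    by (auto simp: fun_eq_iff ladd lmul)
  have bijphi: "bij_betw \<phi> UNIV (Rsp n)"
    by (rule bij_betw_byWitness[where f'=\<psi>]) (auto simp: psiphi phipsi phiR)
  have phiJ: "\<phi> (J x) = Jstd n (\<phi> x)" for x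
  proof
    fix i
    show "\<phi> (J x) i = Jstd n (\<phi> x) i"
    proof (cases "i \<in> {1..n}")
      case True
      then have "2*n+1-i \<in> {1..2*n}" "i \<in> {1..2*n}" by auto
      moreover have "gg (J x) (b i) = - gg x (b (2*n+1-i))" using gJl Jb1[OF True] by simp
      ultimately show ?thesis using True unfolding \<phi>_def Jstd_def by auto
    next
      case False
      show ?thesis
      proof (cases "i \<in> {n+1..2*n}")
        case True
        then have "2*n+1-i \<in> {1..2*n}" "i \<in> {1..2*n}" by auto
        moreover have "gg (J x) (b i) = gg x (b (2*n+1-i))" using gJl Jb2[OF True] by (simp add: rneg)
        ultimately show ?thesis using True False unfolding \<phi>_def Jstd_def by auto
      next
        case False2: False
        then show ?thesis using False unfolding \<phi>_def Jstd_def by auto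
      qed
    qed
  qed
  have phiw: "\<omega>std n (\<phi> x) (\<phi> y) = \<omega> x y" for x y
  proof -
    have "\<omega> x y = - gg x (J y)" by (rule w_g)
    also have "\<dots> = - (\<Sum>i=1..2*n. \<phi> x i * Jstd n (\<phi> y) i)" using parse[of x "J y"] phiJ by simp
    also have "\<dots> = \<omega>std n (\<phi> x) (\<phi> y)" by (rule omega_std_J)
    finally show ?thesis by simp
  qed
  have inI: "z \<in> I" if "gg z N = 0" for z using Nq that by blast
  have perpI: "gg z N = 0" if "z \<in> I" for z using Nperp that by blast
  have bI: "b j \<in> I" if "j \<in> {1..2*n-1}" for j
  proof -
    have "gg (b j) (b (2*n)) = 0" using borth[of j "2*n"] that nn by auto
    then show ?thesis using b2n inI by simp
  qed
  have JNI: "J N \<in> I" using gJl[of N N] gJself[of N] inI by simp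
  have VJ: "J (br N u) = br N (J u) \<and> gg (br N u) (b 1) = 0"
    if u1: "gg u (b 1) = 0" and u2: "gg u N = 0" for u
  proof -
    have uI: "u \<in> I" using inI u2 by blast
    have "gg u (J N) = 0" using u1 b1 by (simp add: rneg)
    then have "gg (J u) N = 0" using gJl[of u N] by simp
    then have JuI: "J u \<in> I" using inI by blast
    have e: "br (J N) (J u) = br N u + J (br (J N) u) + J (br N (J u))" by (rule integ)
    have "br (J N) (J u) = 0" "br (J N) u = 0" using Iabel JNI JuI uI by auto
    then have e2: "br N u = - J (br N (J u))" using e Jzero by (simp add: eq_neg_iff_add_eq_0)
    then have e3: "J (br N u) = br N (J u)" by (simp add: Jneg JJ)
    have "gg (br N u) (b 1) = - gg (br N u) (J N)" using b1 by (simp add: rneg)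
    also have "\<dots> = gg (J (br N u)) N" using gJr[of "br N u" N] by simp
    also have "\<dots> = 0" unfolding e3 using perpI Iid[OF JuI] by blast
    finally show ?thesis using e3 by simp
  qed
  define c where "c = gg (br N (b 1)) (b 1)"
  define d where "d k = gg (br N (b 1)) (b (k+1))" for k
  define a where "a i j = gg (br N (b j)) (b i)" for i j
  have c0: "c \<ge> 0" using Nc b1 unfolding c_def
    by (simp add: lneg rneg bilinear_rneg[OF brbil])
  have linbr: "linear (br N)" using brbil unfolding bilinear_def by blast
  have KD: "\<phi> (br N z) = Dmap n a c d (\<phi> z)" if zI: "z \<in> I" for z
  proof
    fix i
    have lin: "gg (br N z) w = (\<Sum>j=1..2*n. \<phi> z j * gg (br N (b j)) w)" for w
    proof -
      have "br N z = br N (\<Sum>j=1..2*n. gg z (b j) *\<^sub>R b j)" using bexp[of z] by simp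
      also have "\<dots> = (\<Sum>j=1..2*n. gg z (b j) *\<^sub>R br N (b j))"
        unfolding linear_sum[OF linbr] linear_scale[OF linbr] by (rule refl)
      finally have "gg (br N z) w = (\<Sum>j=1..2*n. gg z (b j) * gg (br N (b j)) w)" by (simp add: lsum)
      also have "\<dots> = (\<Sum>j=1..2*n. \<phi> z j * gg (br N (b j)) w)" unfolding \<phi>_def
        by (intro sum.cong) auto
      finally show ?thesis .
    qed
    have z2n: "\<phi> z (2*n) = 0" using perpI[OF zI] b2n nn unfolding \<phi>_def by simp
    have lin2: "gg (br N z) w = \<phi> z 1 * gg (br N (b 1)) w + (\<Sum>j=2..2*n-1. \<phi> z j * gg (br N (b j)) w)" for w
      using lin[of w] sum_split3[OF nn, of "\<lambda>j. \<phi> z j * gg (br N (b j)) w"] z2n by simp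
    show "\<phi> (br N z) i = Dmap n a c d (\<phi> z) i"
    proof (cases "i = 1")
      case True
      have "gg (br N (b j)) (b 1) = 0" if "j \<in> {2..2*n-1}" for j
      proof -
        have "gg (b j) (b 1) = 0" "gg (b j) (b (2*n)) = 0" using borth[of j 1] borth[of j "2*n"] that by auto
        then show ?thesis using VJ b2n by auto
      qed
      then have "(\<Sum>j=2..2*n-1. \<phi> z j * gg (br N (b j)) (b 1)) = 0" by simp
      then show ?thesis using True lin2[of "b 1"] nn unfolding \<phi>_def Dmap_def c_def by simp
    next
      case F1: False
      show ?thesis
      proof (cases "i \<in> {2..2*n-1}")
        case True
        have "\<phi> (br N z) i = gg (br N z) (b i)" using True unfolding \<phi>_def by auto
        also have "\<dots> = \<phi> z 1 * gg (br N (b 1)) (b i) + (\<Sum>j=2..2*n-1. \<phi> z j * gg (br N (b j)) (b i))"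
          by (rule lin2)
        also have "\<dots> = d (i-1) * \<phi> z 1 + Amap n a (\<phi> z) i"
          using True unfolding d_def a_def Amap_def by (simp add: mult.commute)
        finally show ?thesis using True F1 unfolding Dmap_def by simp
      next
        case F2: False
        show ?thesis
        proof (cases "i = 2*n")
          case True
          have "gg (br N z) (b i) = 0" using True b2n perpI Iid[OF zI] by simp
          then show ?thesis using True F1 F2 nn unfolding \<phi>_def Dmap_def by simp
        next
          case False
          then show ?thesis using F1 F2 unfolding \<phi>_def Dmap_def by auto
        qed
      qed
    qed
  qed
  have phi2n: "\<phi> x (2*n) = gg x N" for x using nn b2n unfolding \<phi>_def by simp
  have shiftI: "x - gg x N *\<^sub>R N \<in> I" for x
    using inI[of "x - gg x N *\<^sub>R N"] NN by (simp add: lsub lmul)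
  have Dshift: "Dmap n a c d (\<phi> (x - gg x N *\<^sub>R N)) = Dmap n a c d (\<phi> x)" for x
  proof (rule Dmap_cong[OF nn])
    fix i assume i: "i \<noteq> 2*n"
    show "\<phi> (x - gg x N *\<^sub>R N) i = \<phi> x i"
    proof (cases "i \<in> {1..2*n}")
      case True
      then have "gg N (b i) = 0" using borth[of "2*n" i] i b2n nn by auto
      then show ?thesis using True unfolding \<phi>_def by (simp add: lsub lmul)
    next
      case False then show ?thesis unfolding \<phi>_def by auto
    qed
  qed
  have brexp: "br x y = gg x N *\<^sub>R br N (y - gg y N *\<^sub>R N) - gg y N *\<^sub>R br N (x - gg x N *\<^sub>R N)" for x y
  proof -
    define ax where "ax = gg x N"
    define ay where "ay = gg y N"
    define x' where "x' = x - ax *\<^sub>R N"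
    define y' where "y' = y - ay *\<^sub>R N"
    have xI: "x' \<in> I" and yI: "y' \<in> I" unfolding x'_def y'_def ax_def ay_def by (rule shiftI)+
    have x: "x = x' + ax *\<^sub>R N" and y: "y = y' + ay *\<^sub>R N" unfolding x'_def y'_def by simp_all
    have 1: "br x y = br x' y + ax *\<^sub>R br N y" unfolding x
      by (simp add: bilinear_ladd[OF brbil] bilinear_lmul[OF brbil])
    have 2: "br x' y = br x' y' + ay *\<^sub>R br x' N" unfolding y
      by (simp add: bilinear_radd[OF brbil] bilinear_rmul[OF brbil])
    have 3: "br N y = br N y' + ay *\<^sub>R br N N" unfolding y
      by (simp add: bilinear_radd[OF brbil] bilinear_rmul[OF brbil])
    have 4: "br x' y' = 0" using Iabel xI yI by blast
    have 5: "br N N = 0" by (rule bralt)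
    have 6: "br x' N = - br N x'" by (rule branti)
    have "br x y = ax *\<^sub>R br N y' - ay *\<^sub>R br N x'"
      unfolding 1 2 3 4 5 6 by (simp add: algebra_simps)
    then show ?thesis unfolding x'_def y'_def ax_def ay_def .
  qed
  have phibr: "\<phi> (br x y) = mu n a c d (\<phi> x) (\<phi> y)" for x y
  proof
    fix i
    have "\<phi> (br x y) i = gg x N * \<phi> (br N (y - gg y N *\<^sub>R N)) i - gg y N * \<phi> (br N (x - gg x N *\<^sub>R N)) i"
      unfolding brexp[of x y] \<phi>_def by (simp add: lsub lmul)
    also have "\<dots> = gg x N * Dmap n a c d (\<phi> y) i - gg y N * Dmap n a c d (\<phi> x) i"
      using KD[OF shiftI] Dshift by simp
    finally show "\<phi> (br x y) i = mu n a c d (\<phi> x) (\<phi> y) i" unfolding mu_def phi2n .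
  qed
  have Acx: "A_complex n a" unfolding A_complex_def
  proof
    fix w assume w: "w \<in> Vsp n"
    have wR: "w \<in> Rsp n" unfolding Rsp_def
    proof (intro CollectI allI impI)
      fix i assume "i \<notin> {1..2*n}"
      then have "i \<notin> {2..2*n-1}" by auto
      then show "w i = 0" using w unfolding Vsp_def by blast
    qed
    have w1: "w 1 = 0" and w2n: "w (2*n) = 0" using w nn unfolding Vsp_def by auto
    have Jw1: "Jstd n w 1 = 0" and Jw2n: "Jstd n w (2*n) = 0" using w1 w2n nn unfolding Jstd_def by auto
    define u where "u = \<psi> w"
    have pu: "\<phi> u = w" unfolding u_def using phipsi wR by simp
    have pJu: "\<phi> (J u) = Jstd n w" using phiJ pu by simp
    have phi1: "\<phi> x 1 = gg x (b 1)" for x using nn unfolding \<phi>_def by simp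
    have u1: "gg u (b 1) = 0" and u2: "gg u N = 0"
      using pu w1 w2n phi2n[of u] phi1[of u] by auto
    have Ju1: "gg (J u) (b 1) = 0" and Ju2: "gg (J u) N = 0"
      using pJu Jw1 Jw2n phi2n[of "J u"] phi1[of "J u"] by auto
    have Aw: "Amap n a w = \<phi> (br N u)"
      using KD[OF inI[OF u2]] Dmap_A[of w, OF w1] pu by simp
    have "Amap n a (Jstd n w) = Dmap n a c d (\<phi> (J u))" using Dmap_A[of "Jstd n w", OF Jw1] pJu by simp
    also have "\<dots> = \<phi> (br N (J u))" using KD[OF inI[OF Ju2]] by simp
    also have "\<dots> = \<phi> (J (br N u))" using VJ[OF u1 u2] by simp
    also have "\<dots> = Jstd n (Amap n a w)" using phiJ Aw by simp
    finally show "Amap n a (Jstd n w) = Jstd n (Amap n a w)" .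
  qed
  show ?thesis
    by (intro exI[of _ a] exI[of _ c] exI[of _ d] exI[of _ \<phi>]) (use Acx c0 linphi bijphi phibr phiJ phiw in blast)
qed

lemma part1:
  assumes ideal: "\<exists>I. lie_ideal br I \<and> abelian_subalg br I \<and> dim I = DIM('a) - 1"
  shows "\<exists>a c d \<phi>. A_complex n a \<and> c \<ge> 0 \<and>
            linear_to_R \<phi> \<and> bij_betw \<phi> UNIV (Rsp n) \<and>
            (\<forall>x y. \<phi> (br x y) = mu n a c d (\<phi> x) (\<phi> y)) \<and>
            (\<forall>x. \<phi> (J x) = Jstd n (\<phi> x)) \<and>
            (\<forall>x y. \<omega>std n (\<phi> x) (\<phi> y) = \<omega> x y)"
proof -
  obtain I where I: "lie_ideal br I" "abelian_subalg br I" "dim I = DIM('a) - 1" using ideal by blast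
  have subI: "subspace I" using I(1) unfolding lie_ideal_def by blast
  obtain SI where SI: "finite SI" "orthon gg SI" "SI \<subseteq> I" "card SI = dim I"
    using onb_subspace[OF subI] by blast
  have "card SI < dim (UNIV :: 'a set)" unfolding dim_UNIV SI(4) I(3) using DIM_positive[where 'a='a] by linarith
  then have "\<exists>x\<in>UNIV. gg x x = 1 \<and> (\<forall>s\<in>SI. gg x s = 0)"
    using gext[OF subspace_UNIV SI(2) subset_UNIV SI(1)] by blast
  then obtain N0 where N0: "gg N0 N0 = 1" "\<forall>s\<in>SI. gg N0 s = 0" by blast
  have "independent SI" using orthon_indep SI(2) by blast
  then have Ispan: "I \<subseteq> span SI" using card_eq_dim[of SI I] SI by blast
  have N0p: "\<forall>z\<in>I. gg z N0 = 0"
  proof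
    fix z assume "z \<in> I"
    then have "gg N0 z = 0" using perp_span[OF N0(2)] Ispan by blast
    then show "gg z N0 = 0" by (simp add: gsym)
  qed
  have N0q: "\<forall>z. gg z N0 = 0 \<longrightarrow> z \<in> I"
  proof (intro allI impI)
    fix z assume z: "gg z N0 = 0"
    define T where "T = insert N0 SI"
    have nS: "N0 \<notin> SI" using N0 by auto
    have oT: "orthon gg T" unfolding orthon_def T_def
    proof (intro ballI)
      fix s t assume s: "s \<in> insert N0 SI" and t: "t \<in> insert N0 SI"
      have "gg N0 t = 0" if "t \<in> SI" for t using N0(2) that by blast
      moreover have "gg t N0 = 0" if "t \<in> SI" for t using N0(2) that gsym[of t N0] by simp
      ultimately show "gg s t = (if s = t then 1 else 0)" using s t SI(2) N0(1) nS
        unfolding orthon_def by auto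
    qed
    have cT: "card T = DIM('a)" unfolding T_def using SI(1,4) nS I(3) DIM_positive[where 'a='a] by simp
    have "z = (\<Sum>t\<in>T. gg z t *\<^sub>R t)" by (rule expand[OF oT cT])
    also have "\<dots> = (\<Sum>t\<in>SI. gg z t *\<^sub>R t)" unfolding T_def using SI(1) nS z by simp
    also have "\<dots> \<in> span SI" by (intro span_sum span_scale span_base)
    finally have "z \<in> span SI" .
    moreover have "span SI \<subseteq> I" using span_minimal[OF SI(3) subI] .
    ultimately show "z \<in> I" by blast
  qed
  define N where "N = (if gg (br N0 (J N0)) (J N0) \<ge> 0 then N0 else - N0)"
  have NN: "gg N N = 1" using N0 unfolding N_def by (simp add: lneg rneg)
  have Np: "\<forall>z\<in>I. gg z N = 0" using N0p unfolding N_def by (simp add: rneg)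
  have Nq: "\<forall>z. gg z N = 0 \<longrightarrow> z \<in> I" using N0q unfolding N_def by (simp add: rneg)
  have Nc: "gg (br N (J N)) (J N) \<ge> 0"
  proof (cases "gg (br N0 (J N0)) (J N0) \<ge> 0")
    case True then show ?thesis unfolding N_def by simp
  next
    case False
    have "br (- N0) (J (- N0)) = br N0 (J N0)"
      by (simp add: Jneg bilinear_lneg[OF brbil] bilinear_rneg[OF brbil])
    then show ?thesis using False unfolding N_def by (simp add: Jneg rneg)
  qed
  show ?thesis by (rule from_N[OF I(1) I(2) NN Np Nq Nc])
qed

end

theorem lemma6p1:
  fixes br :: "'a::euclidean_space \<Rightarrow> 'a \<Rightarrow> 'a" and J :: "'a \<Rightarrow> 'a"
    and \<omega> :: "'a \<Rightarrow> 'a \<Rightarrow> real" and n :: nat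
  assumes herm: "hermitian_lie_algebra br J \<omega>"
    and dimg: "DIM('a) = 2 * n"
    and ideal: "\<exists>I. lie_ideal br I \<and> abelian_subalg br I \<and> dim I = DIM('a) - 1"
  shows "(\<exists>a c d \<phi>. A_complex n a \<and> c \<ge> 0 \<and>
            linear_to_R \<phi> \<and> bij_betw \<phi> UNIV (Rsp n) \<and>
            (\<forall>x y. \<phi> (br x y) = mu n a c d (\<phi> x) (\<phi> y)) \<and>
            (\<forall>x. \<phi> (J x) = Jstd n (\<phi> x)) \<and>
            (\<forall>x y. \<omega>std n (\<phi> x) (\<phi> y) = \<omega> x y))
       \<and> (\<forall>(a :: nat \<Rightarrow> nat \<Rightarrow> real) (c::real) (d :: nat \<Rightarrow> real). A_complex n a \<longrightarrow>
            (\<forall>X\<in>Rsp n. \<forall>Y\<in>Rsp n. chern_ricci_form n (mu n a c d) (Jstd n) X Y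
                = - (1/2) * c * (2*c + trA n a) * (X 1 * Y (2*n) - X (2*n) * Y 1)) \<and>
            (\<forall>X\<in>Rsp n. chern_ricci_op n (mu n a c d) (Jstd n) (\<omega>std n) X
                = (\<lambda>i. (- (1/2) * c * (2*c + trA n a)) * pistd n X i)))"
proof -
  interpret hset br J \<omega> n using herm dimg by unfold_locales
  have n1: "1 \<le> n" by (rule n1)
  show ?thesis
  proof (intro conjI allI impI)
    show "\<exists>a c d \<phi>. A_complex n a \<and> c \<ge> 0 \<and>
            linear_to_R \<phi> \<and> bij_betw \<phi> UNIV (Rsp n) \<and>
            (\<forall>x y. \<phi> (br x y) = mu n a c d (\<phi> x) (\<phi> y)) \<and>
            (\<forall>x. \<phi> (J x) = Jstd n (\<phi> x)) \<and>
            (\<forall>x y. \<omega>std n (\<phi> x) (\<phi> y) = \<omega> x y)" by (rule part1[OF ideal])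
  next
    fix a :: "nat \<Rightarrow> nat \<Rightarrow> real" and c :: real and d :: "nat \<Rightarrow> real"
    show "\<forall>X\<in>Rsp n. \<forall>Y\<in>Rsp n. chern_ricci_form n (mu n a c d) (Jstd n) X Y
                = - (1/2) * c * (2*c + trA n a) * (X 1 * Y (2*n) - X (2*n) * Y 1)"
      using crf[OF n1] by blast
    show "\<forall>X\<in>Rsp n. chern_ricci_op n (mu n a c d) (Jstd n) (\<omega>std n) X
                = (\<lambda>i. (- (1/2) * c * (2*c + trA n a)) * pistd n X i)"
      using crop[OF n1] by blast
  qed
qed

end
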